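(* Let $G=(V,E,w)$, $s$, $\tau$ (with $|\tau|\ge 2$) and a budget $b\ge 0$ be as in the context, and suppose that at least one feasible subgraph exists. Then among the maximizers of $\textsc{CD}_{\tau,s}(S)$ over all feasible subgraphs $S\subseteq G$, there is at least one that is a directed acyclic graph.
   Context: Let $G=(V,E,w)$ be a finite directed graph with non-negative edge weights $w:E\to\mathbb{R}_{\ge 0}$. A path from $u$ to $v$ in a subgraph $S\subseteq G$ is a sequence $u=v_0\to v_1\to\cdots\to v_k=v$ ($k\ge 0$) with each $v_i\to v_{i+1}$ an edge of $S$; for $i\le j$, $w_P(v_i,v_j)=\sum_{m=i}^{j-1} w(v_m\to v_{m+1})$. A vertex $y$ is reachable from $x$ in $S$ if there is a path from $x$ to $y$ in $S$ (a vertex is reachable from itself). Fix a start vertex $s\in V$ and a finite target set $\tau\subseteq V\setminus\{s\}$ with $|\tau|\ge 2$. The cost of a subgraph $S$ is $w(S)=\sum_{e\in E(S)} w(e)$. For a subgraph $S$ containing $s$ and $\tau$ in which every target is reachable from $s$: for a path $P=v_0\to\cdots\to v_k$ in $S$ with $v_0=s$, $v_k=t\in\tau$, let $\ell$ be the largest index such that some target in $\tau\setminus\{t\}$ is reachable from $v_\ell$ in $S$; the last deceptive point is $l(P,t)=v_\ell$. The unique distance of $t\in\tau$ is $\textsc{U}_S(t)=\min\{w_P(l(P,t),t): P \text{ a path in } S \text{ from } s \text{ to } t\}$, and the counterdeceptiveness of $S$ is $\textsc{CD}_{\tau,s}(S)=\min_{t\in\tau}\textsc{U}_S(t)$. Given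 a budget $b\ge 0$, a subgraph $S\subseteq G$ is feasible if $s\in V(S)$, $\tau\subseteq V(S)$, every target is reachable from $s$ in $S$, and $w(S)\le b$. A maximizer is a feasible $S$ maximizing $\textsc{CD}_{\tau,s}(S)$ among feasible subgraphs. *)

theory Defs
  imports Complex_Main
begin

text \<open>Directed graphs are given by a vertex set V and an edge set E of ordered pairs;
a subgraph S is a pair (VS, ES) of a vertex set and an edge set.\<close>

type_synonym 'a sgraph = "'a set \<times> ('a \<times> 'a) set"

definition is_path :: "'a sgraph \<Rightarrow> 'a list \<Rightarrow> 'a \<Rightarrow> 'a \<Rightarrow> bool" where
  "is_path S xs u v \<longleftrightarrow> xs \<noteq> [] \<and> hd xs = u \<and> last xs = v \<and> set xs \<subseteq> fst S \<and>
     (\<forall>i. Suc i < length xs \<longrightarrow> (xs ! i, xs ! Suc i) \<in> snd S)"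

definition reachable :: "'a sgraph \<Rightarrow> 'a \<Rightarrow> 'a \<Rightarrow> bool" where
  "reachable S x y \<longleftrightarrow> (\<exists>xs. is_path S xs x y)"

definition path_weight :: "('a \<times> 'a \<Rightarrow> real) \<Rightarrow> 'a list \<Rightarrow> nat \<Rightarrow> nat \<Rightarrow> real" where
  "path_weight w xs i j = (\<Sum>m\<in>{i..<j}. w (xs ! m, xs ! Suc m))"

definition last_deceptive_idx :: "'a sgraph \<Rightarrow> 'a set \<Rightarrow> 'a list \<Rightarrow> 'a \<Rightarrow> nat" where
  "last_deceptive_idx S \<tau> xs t =
     (GREATEST l. l < length xs \<and> (\<exists>t'\<in>\<tau> - {t}. reachable S (xs ! l) t'))"

definition unique_dist :: "('a \<times> 'a \<Rightarrow> real) \<Rightarrow> 'a sgraph \<Rightarrow> 'a \<Rightarrow> 'a set \<Rightarrow> 'a \<Rightarrow> real" where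
  "unique_dist w S s \<tau> t =
     Inf {path_weight w xs (last_deceptive_idx S \<tau> xs t) (length xs - 1) | xs. is_path S xs s t}"

definition counterdeceptiveness :: "('a \<times> 'a \<Rightarrow> real) \<Rightarrow> 'a set \<Rightarrow> 'a \<Rightarrow> 'a sgraph \<Rightarrow> real" where
  "counterdeceptiveness w \<tau> s S = Min (unique_dist w S s \<tau> ` \<tau>)"

definition cost :: "('a \<times> 'a \<Rightarrow> real) \<Rightarrow> 'a sgraph \<Rightarrow> real" where
  "cost w S = (\<Sum>e\<in>snd S. w e)"

definition feasible ::
  "'a set \<Rightarrow> ('a \<times> 'a) set \<Rightarrow> ('a \<times> 'a \<Rightarrow> real) \<Rightarrow> 'a \<Rightarrow> 'a set \<Rightarrow> real \<Rightarrow> 'a sgraph \<Rightarrow> bool" where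
  "feasible V E w s \<tau> b S \<longleftrightarrow>
     fst S \<subseteq> V \<and> snd S \<subseteq> E \<and> snd S \<subseteq> fst S \<times> fst S \<and>
     s \<in> fst S \<and> \<tau> \<subseteq> fst S \<and> (\<forall>t\<in>\<tau>. reachable S s t) \<and> cost w S \<le> b"

end

theory Submission
  imports Defs
begin

lemma path_mono:
  "is_path S xs u v \<Longrightarrow> fst S \<subseteq> fst T \<Longrightarrow> snd S \<subseteq> snd T \<Longrightarrow> is_path T xs u v"
  unfolding is_path_def by (auto 0 3)

lemma reachable_mono:
  assumes "reachable S u v" "fst S \<subseteq> fst T" "snd S \<subseteq> snd T"
  shows "reachable T u v"
proof -
  obtain xs where "is_path S xs u v" using assms(1) unfolding reachable_def by blast
  then have "is_path T xs u v" by (rule path_mono[OF _ assms(2,3)])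
  then show ?thesis unfolding reachable_def by blast
qed

lemma path_snoc:
  assumes "is_path S xs u v" "(v,x) \<in> snd S" "x \<in> fst S"
  shows "is_path S (xs@[x]) u x"
  unfolding is_path_def
proof (intro conjI allI impI)
  have ne: "xs \<noteq> []" and l: "last xs = v" and h: "hd xs = u" and st: "set xs \<subseteq> fst S"
    and e: "\<And>i. Suc i < length xs \<Longrightarrow> (xs ! i, xs ! Suc i) \<in> snd S"
    using assms(1) unfolding is_path_def by auto
  show "xs @ [x] \<noteq> []" by simp
  show "hd (xs @ [x]) = u" using ne h by simp
  show "last (xs @ [x]) = x" by simp
  show "set (xs @ [x]) \<subseteq> fst S" using st assms(3) by simp
  fix i assume i: "Suc i < length (xs @ [x])"
  show "((xs @ [x]) ! i, (xs @ [x]) ! Suc i) \<in> snd S"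
  proof (cases "Suc i < length xs")
    case True then show ?thesis using e[OF True] by (simp add: nth_append)
  next
    case False
    then have si: "Suc i = length xs" using i by simp
    have "(xs @ [x]) ! i = xs ! i" using si by (simp add: nth_append)
    also have "\<dots> = last xs" using si ne by (simp add: last_conv_nth flip: si)
    finally have a1: "(xs @ [x]) ! i = v" using l by simp
    have a2: "(xs @ [x]) ! Suc i = x" using si by simp
    show ?thesis using a1 a2 assms(2) by simp
  qed
qed

lemma path_take:
  assumes "is_path S xs u v" "0 < k" "k \<le> length xs"
  shows "is_path S (take k xs) u (xs ! (k - 1))"
  unfolding is_path_def
proof (intro conjI allI impI)
  have ne: "xs \<noteq> []" and h: "hd xs = u" and st: "set xs \<subseteq> fst S"
    and e: "\<And>i. Suc i < length xs \<Longrightarrow> (xs ! i, xs ! Suc i) \<in> snd S"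
    using assms(1) unfolding is_path_def by auto
  show "take k xs \<noteq> []" using assms(2) ne by simp
  show "hd (take k xs) = u" using assms(2) ne h by (simp add: hd_take)
  show "last (take k xs) = xs ! (k - 1)" using assms(2,3) ne
    by (simp add: last_conv_nth)
  show "set (take k xs) \<subseteq> fst S" using st by (meson in_set_takeD subset_iff)
  fix i assume "Suc i < length (take k xs)"
  then have i1: "Suc i < length xs" and i2: "Suc i < k" by auto
  have "take k xs ! i = xs ! i" using i2 by simp
  moreover have "take k xs ! Suc i = xs ! Suc i" using i2 by simp
  ultimately show "(take k xs ! i, take k xs ! Suc i) \<in> snd S" using e[OF i1] by simp
qed

lemma ud_mono:
  assumes sub: "fst T = fst S" "snd T \<subseteq> snd S" and SE: "snd S \<subseteq> E"
    and wpos: "\<forall>e\<in>E. w e \<ge> 0"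
    and t2: "\<exists>t'\<in>\<tau>-{t}. reachable T s t'" and rt: "reachable T s t"
  shows "unique_dist w S s \<tau> t \<le> unique_dist w T s \<tau> t"
proof -
  let ?A = "\<lambda>S. {path_weight w xs (last_deceptive_idx S \<tau> xs t) (length xs - 1) | xs. is_path S xs s t}"
  have ne: "?A T \<noteq> {}" using rt unfolding reachable_def by blast
  have pw: "0 \<le> w (xs ! m, xs ! Suc m)" if "is_path S xs s t" "Suc m < length xs" for xs m
    using that SE wpos unfolding is_path_def by blast
  have bdd: "bdd_below (?A S)"
    unfolding bdd_below_def
  proof (intro exI ballI)
    fix a assume "a \<in> ?A S"
    then obtain xs where a: "a = path_weight w xs (last_deceptive_idx S \<tau> xs t) (length xs - 1)"
      and p: "is_path S xs s t" by blast
    show "0 \<le> a" unfolding a path_weight_def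
    proof (rule sum_nonneg)
      fix m assume "m \<in> {last_deceptive_idx S \<tau> xs t..<length xs - 1}"
      then have "Suc m < length xs" by auto
      then show "0 \<le> w (xs ! m, xs ! Suc m)" by (rule pw[OF p])
    qed
  qed
  have "Inf (?A S) \<le> a" if "a \<in> ?A T" for a
  proof -
    from that obtain xs where a: "a = path_weight w xs (last_deceptive_idx T \<tau> xs t) (length xs - 1)"
      and p: "is_path T xs s t" by blast
    have pS: "is_path S xs s t" using path_mono[OF p] sub by auto
    define PT where "PT = (\<lambda>l. l < length xs \<and> (\<exists>t'\<in>\<tau>-{t}. reachable T (xs!l) t'))"
    define PS where "PS = (\<lambda>l. l < length xs \<and> (\<exists>t'\<in>\<tau>-{t}. reachable S (xs!l) t'))"
    have x0: "xs ! 0 = s" "xs \<noteq> []" using p unfolding is_path_def by (auto simp: hd_conv_nth)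
    have PT0: "PT 0" unfolding PT_def using x0 t2 by auto
    have bT: "\<And>y. PT y \<Longrightarrow> y \<le> length xs" unfolding PT_def by auto
    have bS: "\<And>y. PS y \<Longrightarrow> y \<le> length xs" unfolding PS_def by auto
    have lT: "last_deceptive_idx T \<tau> xs t = Greatest PT" unfolding last_deceptive_idx_def PT_def ..
    have lS: "last_deceptive_idx S \<tau> xs t = Greatest PS" unfolding last_deceptive_idx_def PS_def ..
    have "PT (Greatest PT)" by (rule GreatestI_nat[of PT 0 "length xs", OF PT0 bT])
    then obtain t' where t': "Greatest PT < length xs" "t' \<in> \<tau>-{t}" "reachable T (xs ! Greatest PT) t'"
      unfolding PT_def by blast
    have "reachable S (xs ! Greatest PT) t'" using reachable_mono[OF t'(3)] sub by simp
    then have "PS (Greatest PT)" unfolding PS_def using t' by blast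
    then have le: "Greatest PT \<le> Greatest PS" by (rule Greatest_le_nat[of PS _ "length xs", OF _ bS])
    have "path_weight w xs (Greatest PS) (length xs - 1) \<le> path_weight w xs (Greatest PT) (length xs - 1)"
      unfolding path_weight_def
    proof (rule sum_mono2)
      show "{Greatest PS..<length xs - 1} \<subseteq> {Greatest PT..<length xs - 1}" using le by auto
      fix m assume "m \<in> {Greatest PT..<length xs - 1} - {Greatest PS..<length xs - 1}"
      then have "Suc m < length xs" by auto
      then show "0 \<le> w (xs ! m, xs ! Suc m)" by (rule pw[OF pS])
    qed simp
    moreover have "Inf (?A S) \<le> path_weight w xs (Greatest PS) (length xs - 1)"
    proof -
      have mem: "path_weight w xs (last_deceptive_idx S \<tau> xs t) (length xs - 1) \<in> ?A S"
        using pS by blast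
      show ?thesis using cInf_lower[OF mem bdd] lS by simp
    qed
    ultimately show ?thesis using a lT by simp
  qed
  then have "Inf (?A S) \<le> Inf (?A T)" by (intro cInf_greatest[OF ne])
  then show ?thesis unfolding unique_dist_def .
qed

lemma acyclic_sub:
  assumes F: "feasible V E w s \<tau> b S" and wpos: "\<forall>e\<in>E. w e \<ge> 0" and fE: "finite E"
  shows "\<exists>T. feasible V E w s \<tau> b T \<and> fst T = fst S \<and> snd T \<subseteq> snd S \<and> acyclic (snd T)"
proof -
  define d where "d = (\<lambda>u. LEAST n. \<exists>xs. is_path S xs s u \<and> length xs = Suc n)"
  define T where "T = (fst S, {(u,v). (u,v) \<in> snd S \<and> reachable S s u \<and> d v = Suc (d u)})"
  have fT: "fst T = fst S" and sT: "snd T \<subseteq> snd S" unfolding T_def by auto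
  have sS: "s \<in> fst S" using F unfolding feasible_def by auto
  have dI: "\<exists>ys. is_path S ys s v \<and> length ys = Suc (d v)" if "reachable S s v" for v
  proof -
    from that obtain xs where xs: "is_path S xs s v" unfolding reachable_def by blast
    then have "length xs = Suc (length xs - 1)" unfolding is_path_def by (cases xs) auto
    then have "\<exists>n xs. is_path S xs s v \<and> length xs = Suc n" using xs by blast
    then show ?thesis unfolding d_def by (rule LeastI_ex)
  qed
  have dle: "d v \<le> n" if "is_path S xs s v" "length xs = Suc n" for v xs n
    unfolding d_def by (rule Least_le) (use that in blast)
  have main: "\<forall>v. d v = n \<longrightarrow> reachable S s v \<longrightarrow> reachable T s v" for n
  proof (induction n rule: less_induct)
    case (less n)
    show ?case
    proof (intro allI impI)
      fix v assume dv: "d v = n" and r: "reachable S s v"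
      obtain ys where ys: "is_path S ys s v" "length ys = Suc (d v)" using dI[OF r] by blast
      show "reachable T s v"
      proof (cases "d v")
        case 0
        then obtain x where "ys = [x]" using ys(2) by (cases ys) auto
        then have "v = s" using ys(1) unfolding is_path_def by auto
        then show ?thesis unfolding reachable_def is_path_def using sS fT by (intro exI[of _ "[s]"]) auto
      next
        case (Suc m)
        define u where "u = ys ! m"
        have pu: "is_path S (take (Suc m) ys) s u" using path_take[OF ys(1), of "Suc m"] ys(2) Suc
          unfolding u_def by auto
        have ru: "reachable S s u" using pu unfolding reachable_def by blast
        have e: "(u, v) \<in> snd S" and vS: "v \<in> fst S"
          using ys Suc unfolding is_path_def u_def by (auto simp: last_conv_nth)
        have "d u \<le> m" using dle[OF pu] ys(2) Suc by simp
        moreover have "m \<le> d u"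
        proof -
          obtain zs where zs: "is_path S zs s u" "length zs = Suc (d u)" using dI[OF ru] by blast
          have "is_path S (zs@[v]) s v" by (rule path_snoc[OF zs(1) e vS])
          then have "d v \<le> Suc (d u)" using dle zs(2) by fastforce
          then show ?thesis using Suc by simp
        qed
        ultimately have du: "d u = m" by simp
        then have "reachable T s u" using less.IH[of m] dv Suc ru by auto
        then obtain zs where zs: "is_path T zs s u" unfolding reachable_def by blast
        have "(u,v) \<in> snd T" unfolding T_def using e ru du Suc by auto
        then have "is_path T (zs@[v]) s v" using path_snoc[OF zs] vS fT by auto
        then show ?thesis unfolding reachable_def by blast
      qed
    qed
  qed
  have reachT: "reachable T s v" if "reachable S s v" for v using main that by blast
  have feasT: "feasible V E w s \<tau> b T"
  proof -
    have c: "cost w T \<le> cost w S"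
      unfolding cost_def
      by (rule sum_mono2) (use F fE wpos sT in \<open>auto simp: feasible_def intro: finite_subset\<close>)
    show ?thesis using F c reachT fT sT unfolding feasible_def by auto
  qed
  have mono: "(x,y) \<in> (snd T)\<^sup>+ \<Longrightarrow> d x < d y" for x y
    by (induction rule: trancl_induct) (auto simp: T_def)
  have "acyclic (snd T)" unfolding acyclic_def using mono by blast
  then show ?thesis using feasT fT sT by blast
qed

theorem lemma1:
  fixes V :: "'a set" and E :: "('a \<times> 'a) set" and w :: "'a \<times> 'a \<Rightarrow> real"
    and s :: 'a and \<tau> :: "'a set" and b :: real
  assumes "finite V" and "E \<subseteq> V \<times> V" and "\<forall>e\<in>E. w e \<ge> 0"
    and "s \<in> V" and "\<tau> \<subseteq> V - {s}" and "card \<tau> \<ge> 2" and "b \<ge> 0"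
    and "\<exists>S. feasible V E w s \<tau> b S"
  shows "\<exists>S. feasible V E w s \<tau> b S \<and>
           (\<forall>S'. feasible V E w s \<tau> b S' \<longrightarrow>
              counterdeceptiveness w \<tau> s S' \<le> counterdeceptiveness w \<tau> s S) \<and>
           acyclic (snd S)"
proof -
  have fE: "finite E" using assms(1,2) by (meson finite_SigmaI finite_subset)
  define FS where "FS = {S. feasible V E w s \<tau> b S}"
  have "FS \<subseteq> Pow V \<times> Pow E" unfolding FS_def feasible_def by auto
  then have fin: "finite FS" using assms(1) fE by (meson finite_Pow_iff finite_SigmaI finite_subset)
  have neF: "FS \<noteq> {}" using assms(8) unfolding FS_def by blast
  let ?cd = "counterdeceptiveness w \<tau> s"
  have "Max (?cd ` FS) \<in> ?cd ` FS" using fin neF by (intro Max_in) auto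
  then obtain S where S: "S \<in> FS" "?cd S = Max (?cd ` FS)" by (metis imageE)
  have Smax: "?cd S' \<le> ?cd S" if "feasible V E w s \<tau> b S'" for S'
    using S fin that unfolding FS_def by auto
  obtain T where T: "feasible V E w s \<tau> b T" "fst T = fst S" "snd T \<subseteq> snd S" "acyclic (snd T)"
    using acyclic_sub[of V E w s \<tau> b S] S(1) assms(3) fE unfolding FS_def by auto
  have ftau: "finite \<tau>" using assms(1,5) finite_subset by blast
  have netau: "\<tau> \<noteq> {}" using assms(6) by auto
  have SE: "snd S \<subseteq> E" using S(1) unfolding FS_def feasible_def by auto
  have udle: "unique_dist w S s \<tau> t \<le> unique_dist w T s \<tau> t" if t: "t \<in> \<tau>" for t
  proof (rule ud_mono[OF T(2) T(3) SE assms(3)])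
    have "\<tau> - {t} \<noteq> {}"
    proof
      assume "\<tau> - {t} = {}"
      then have "\<tau> \<subseteq> {t}" by blast
      then have "card \<tau> \<le> card {t}" by (intro card_mono) simp_all
      then have "card \<tau> \<le> 1" by simp
      then show False using assms(6) by simp
    qed
    then show "\<exists>t'\<in>\<tau>-{t}. reachable T s t'" using T(1) unfolding feasible_def by auto
    show "reachable T s t" using T(1) t unfolding feasible_def by auto
  qed
  have "?cd S \<le> ?cd T"
  proof -
    have "?cd T \<in> unique_dist w T s \<tau> ` \<tau>"
      unfolding counterdeceptiveness_def using ftau netau by (intro Min_in) auto
    then obtain t0 where t0: "t0 \<in> \<tau>" "?cd T = unique_dist w T s \<tau> t0" by (metis imageE)
    have "?cd S \<le> unique_dist w S s \<tau> t0"
      unfolding counterdeceptiveness_def using ftau t0(1) by (intro Min_le) auto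
    then show ?thesis using t0 udle[OF t0(1)] by linarith
  qed
  then show ?thesis using T(1) T(4) Smax by (meson order_trans)
qed

end
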